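(* Let $k \ge 3$ and let $G$ be a connected $k$-regular graph of order $n$ with $G \not\cong K_{k,k}$. Then $\gamma_{\rm gr}^t(G) \ge \frac{n}{k-1}$, and the inequality is strict if $k \ge 5$.
   Context: $N(v)$ denotes the open neighborhood of $v$. A sequence $S=(v_1,\ldots,v_k)$ of distinct vertices of a graph $G$ without isolated vertices is a legal sequence if $N(v_i)\setminus \bigcup_{j=1}^{i-1} N(v_j)\neq\emptyset$ for every $i\in\{2,\ldots,k\}$, and a total dominating sequence if moreover $\{v_1,\ldots,v_k\}$ is a total dominating set of $G$. $\gamma_{\rm gr}^t(G)$ is the maximum length of a total dominating sequence of $G$. *)

theory Defs
  imports Complex_Main
begin

definition simple_graph :: "'a set \<Rightarrow> ('a \<Rightarrow> 'a \<Rightarrow> bool) \<Rightarrow> bool" where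
  "simple_graph V E \<longleftrightarrow> finite V \<and> (\<forall>u v. E u v \<longrightarrow> u \<in> V \<and> v \<in> V)
     \<and> (\<forall>u v. E u v \<longrightarrow> E v u) \<and> (\<forall>v. \<not> E v v)"

definition nbhd :: "'a set \<Rightarrow> ('a \<Rightarrow> 'a \<Rightarrow> bool) \<Rightarrow> 'a \<Rightarrow> 'a set" where
  "nbhd V E v = {u \<in> V. E v u}"

definition regular :: "'a set \<Rightarrow> ('a \<Rightarrow> 'a \<Rightarrow> bool) \<Rightarrow> nat \<Rightarrow> bool" where
  "regular V E k \<longleftrightarrow> (\<forall>v\<in>V. card (nbhd V E v) = k)"

definition connected_graph :: "'a set \<Rightarrow> ('a \<Rightarrow> 'a \<Rightarrow> bool) \<Rightarrow> bool" where
  "connected_graph V E \<longleftrightarrow> V \<noteq> {} \<and>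
     (\<forall>u\<in>V. \<forall>v\<in>V. (u, v) \<in> {(x, y). E x y}\<^sup>*)"

definition graph_iso :: "'a set \<Rightarrow> ('a \<Rightarrow> 'a \<Rightarrow> bool) \<Rightarrow> 'b set \<Rightarrow> ('b \<Rightarrow> 'b \<Rightarrow> bool) \<Rightarrow> bool" where
  "graph_iso V E W F \<longleftrightarrow> (\<exists>f. bij_betw f V W \<and> (\<forall>u\<in>V. \<forall>v\<in>V. E u v \<longleftrightarrow> F (f u) (f v)))"

definition Kkk_verts :: "nat \<Rightarrow> nat set" where
  "Kkk_verts k = {0..<2*k}"

definition Kkk_edge :: "nat \<Rightarrow> nat \<Rightarrow> nat \<Rightarrow> bool" where
  "Kkk_edge k u v \<longleftrightarrow> u < 2*k \<and> v < 2*k \<and> ((u < k \<and> k \<le> v) \<or> (v < k \<and> k \<le> u))"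

definition legal_seq :: "'a set \<Rightarrow> ('a \<Rightarrow> 'a \<Rightarrow> bool) \<Rightarrow> 'a list \<Rightarrow> bool" where
  "legal_seq V E S \<longleftrightarrow> distinct S \<and> set S \<subseteq> V \<and>
     (\<forall>i. 1 \<le> i \<and> i < length S \<longrightarrow>
        nbhd V E (S ! i) - (\<Union>j<i. nbhd V E (S ! j)) \<noteq> {})"

definition total_dominating_set :: "'a set \<Rightarrow> ('a \<Rightarrow> 'a \<Rightarrow> bool) \<Rightarrow> 'a set \<Rightarrow> bool" where
  "total_dominating_set V E D \<longleftrightarrow> D \<subseteq> V \<and> (\<forall>v\<in>V. \<exists>u\<in>D. E v u)"

definition total_dominating_seq :: "'a set \<Rightarrow> ('a \<Rightarrow> 'a \<Rightarrow> bool) \<Rightarrow> 'a list \<Rightarrow> bool" where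
  "total_dominating_seq V E S \<longleftrightarrow> legal_seq V E S \<and> total_dominating_set V E (set S)"

definition gamma_gr_t :: "'a set \<Rightarrow> ('a \<Rightarrow> 'a \<Rightarrow> bool) \<Rightarrow> nat" where
  "gamma_gr_t V E = Max {length S | S. total_dominating_seq V E S}"

end

theory Submission
  imports Defs
begin

locale kreg =
  fixes V :: "'a set" and E :: "'a \<Rightarrow> 'a \<Rightarrow> bool" and k :: nat
  assumes sg: "simple_graph V E" and reg: "regular V E k" and k3: "k \<ge> 3"
begin

abbreviation N where "N v \<equiv> nbhd V E v"

definition DOM :: "'a list \<Rightarrow> 'a set" where "DOM S = \<Union>(N ` set S)"
definition closed :: "'a set \<Rightarrow> bool" where
  "closed Z \<longleftrightarrow> Z \<subseteq> V \<and> (\<forall>v. N v \<inter> Z \<noteq> {} \<longrightarrow> N v \<subseteq> Z)"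
definition tw :: "'a \<Rightarrow> 'a set" where "tw z = {w\<in>V. N w = N z}"

lemma finV: "finite V" using sg by (simp add: simple_graph_def)
lemma edgeV: "E u v \<Longrightarrow> u \<in> V \<and> v \<in> V" using sg by (simp add: simple_graph_def)
lemma sym: "E u v \<Longrightarrow> E v u" using sg by (simp add: simple_graph_def)
lemma irr: "\<not> E v v" using sg by (simp add: simple_graph_def)
lemma memN: "u \<in> N v \<longleftrightarrow> E v u" using edgeV by (auto simp: nbhd_def)
lemma memN_sym: "u \<in> N v \<longleftrightarrow> v \<in> N u" using memN sym by blast
lemma N_sub: "N v \<subseteq> V" by (auto simp: nbhd_def)
lemma finN: "finite (N v)" using N_sub finV finite_subset by blast
lemma cardN: "v \<in> V \<Longrightarrow> card (N v) = k" using reg by (simp add: regular_def)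
lemma N_ne: "v \<in> V \<Longrightarrow> N v \<noteq> {}" using cardN k3 by fastforce
lemma N_notV: "v \<notin> V \<Longrightarrow> N v = {}" using memN edgeV by blast

lemma N_eq_of_sub: "u \<in> V \<Longrightarrow> w \<in> V \<Longrightarrow> N u \<subseteq> N w \<Longrightarrow> N u = N w"
  by (metis cardN card_subset_eq finN)

lemma DOM_sub: "DOM S \<subseteq> V" using N_sub by (auto simp: DOM_def)
lemma DOM_app: "DOM (S @ T) = DOM S \<union> DOM T" by (auto simp: DOM_def)
lemma DOM_Cons: "DOM (v # T) = N v \<union> DOM T" by (auto simp: DOM_def)
lemma DOM_Nil: "DOM [] = {}" by (simp add: DOM_def)

lemma legal_snoc:
  assumes "legal_seq V E S" "v \<in> V" "N v - DOM S \<noteq> {}"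
  shows "legal_seq V E (S @ [v])"
proof -
  have vS: "v \<notin> set S" using assms(3) by (auto simp: DOM_def)
  have U: "(\<Union>j<length S. N (S ! j)) = DOM S"
    by (auto simp: DOM_def in_set_conv_nth) (use nth_mem in blast)
  show ?thesis
    unfolding legal_seq_def
  proof (intro conjI allI impI)
    show "distinct (S @ [v])" using assms(1) vS by (simp add: legal_seq_def)
    show "set (S @ [v]) \<subseteq> V" using assms(1,2) by (simp add: legal_seq_def)
    fix i assume i: "1 \<le> i \<and> i < length (S @ [v])"
    show "N ((S @ [v]) ! i) - (\<Union>j<i. N ((S @ [v]) ! j)) \<noteq> {}"
    proof (cases "i < length S")
      case True
      have "(\<Union>j<i. N ((S @ [v]) ! j)) = (\<Union>j<i. N (S ! j))"
        using True by (auto simp: nth_append)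
      then show ?thesis using True i assms(1) by (auto simp: legal_seq_def nth_append)
    next
      case False
      then have ii: "i = length S" using i by simp
      have "(\<Union>j<i. N ((S @ [v]) ! j)) = (\<Union>j<length S. N (S ! j))"
        using ii by (auto simp: nth_append)
      then show ?thesis using ii U assms(3) by (simp add: nth_append)
    qed
  qed
qed

lemma legal_Nil: "legal_seq V E []" by (simp add: legal_seq_def)

lemma closed_diff: "closed A \<Longrightarrow> closed B \<Longrightarrow> closed (A - B)"
  unfolding closed_def by blast

lemma closed_V: "closed V" using N_sub by (auto simp: closed_def)

lemma twins_of_cover:
  assumes "A \<subseteq> V" "\<forall>y. N y \<inter> A \<noteq> {} \<longrightarrow> A \<subseteq> N y" "a \<in> A"
  shows "A \<subseteq> tw a"
proof
  fix w assume w: "w \<in> A"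
  have "N a \<subseteq> N w"
  proof
    fix y assume "y \<in> N a"
    then have "a \<in> N y" using memN_sym by blast
    then have "A \<subseteq> N y" using assms(2,3) by blast
    then show "y \<in> N w" using w memN_sym by blast
  qed
  then have "N w = N a" using N_eq_of_sub assms w by (metis subsetD)
  then show "w \<in> tw a" using w assms(1) by (auto simp: tw_def)
qed

lemma fin_tw: "finite (tw z)" using finV by (simp add: tw_def)

lemma phase:
  assumes "finite A" "legal_seq V E S" "A \<inter> DOM S = {}" "closed W" "W \<inter> DOM S = {}"
    "A \<inter> W = {}" "DOM S \<union> A \<union> W = V" "A \<noteq> {}"
    "\<forall>Z. closed Z \<longrightarrow> Z \<subseteq> A \<longrightarrow> Z = {}" "\<forall>z\<in>A. card (tw z) \<le> c"
  shows "\<exists>T. legal_seq V E (S @ T) \<and> DOM (S @ T) = DOM S \<union> A \<and>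
             (k - 1) * length T + c \<ge> card A + (k - 1)"
  using assms
proof (induction "card A" arbitrary: A S rule: less_induct)
  case less
  have AV: "A \<subseteq> V" using less.prems(7) by blast
  have "\<not> closed A" using less.prems(8,9) by blast
  then obtain v0 where v0: "N v0 \<inter> A \<noteq> {}" "\<not> N v0 \<subseteq> A" using AV by (auto simp: closed_def)
  have v0V: "v0 \<in> V" using v0(1) N_notV by blast
  have "card (N v0 \<inter> A) < card (N v0)"
    using v0(2) finN by (metis Int_lower1 inf.absorb_iff1 psubsetI psubset_card_mono)
  then have f0: "card (N v0 \<inter> A) \<le> k - 1" using cardN v0V by simp
  obtain v where v: "v \<in> V \<and> N v \<inter> A \<noteq> {}"
    and vmin: "\<forall>y. y \<in> V \<and> N y \<inter> A \<noteq> {} \<longrightarrow> card (N v \<inter> A) \<le> card (N y \<inter> A)"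
    using ex_has_least_nat[of "\<lambda>y. y \<in> V \<and> N y \<inter> A \<noteq> {}" v0 "\<lambda>y. card (N y \<inter> A)"] v0V v0(1)
    by blast
  have fle: "card (N v \<inter> A) \<le> k - 1" using vmin v0V v0(1) f0 by fastforce
  have vW: "N v \<inter> W = {}"
  proof (rule ccontr)
    assume "N v \<inter> W \<noteq> {}"
    then have "N v \<subseteq> W" using less.prems(4) by (auto simp: closed_def)
    then show False using v less.prems(6) by blast
  qed
  have NvD: "N v \<subseteq> DOM S \<union> (N v \<inter> A)" using vW less.prems(7) N_sub by blast
  have leg1: "legal_seq V E (S @ [v])"
    using legal_snoc[OF less.prems(2)] v less.prems(3) by blast
  have DOM1: "DOM (S @ [v]) = DOM S \<union> (N v \<inter> A)"
    using NvD by (auto simp: DOM_app DOM_Cons DOM_Nil)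
  define A' where "A' = A - N v"
  have cardA: "card A = card A' + card (N v \<inter> A)"
  proof -
    have "A = A' \<union> (N v \<inter> A)" "A' \<inter> (N v \<inter> A) = {}" by (auto simp: A'_def)
    then show ?thesis using less.prems(1) card_Un_disjoint
      by (metis finite_Un)
  qed
  show ?case
  proof (cases "A' = {}")
    case True
    then have AN: "A \<subseteq> N v" by (simp add: A'_def)
    have cov: "\<forall>y. N y \<inter> A \<noteq> {} \<longrightarrow> A \<subseteq> N y"
    proof (intro allI impI)
      fix y assume y: "N y \<inter> A \<noteq> {}"
      then have yV: "y \<in> V" using N_notV by blast
      have "card (N v \<inter> A) \<le> card (N y \<inter> A)" using vmin y yV by blast
      moreover have "N v \<inter> A = A" using AN by blast
      ultimately have "card A \<le> card (N y \<inter> A)" by simp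
      then have "N y \<inter> A = A" by (intro card_seteq) (use less.prems(1) in auto)
      then show "A \<subseteq> N y" by blast
    qed
    obtain a where a: "a \<in> A" using less.prems(8) by blast
    have "A \<subseteq> tw a" using twins_of_cover[OF AV cov a] .
    then have "card A \<le> card (tw a)" using fin_tw card_mono by blast
    then have cA: "card A \<le> c" using less.prems(10) a by fastforce
    show ?thesis
      apply (rule exI[of _ "[v]"])
      using leg1 DOM1 AN cA by auto
  next
    case False
    have lt: "card A' < card A" using cardA v by (simp add: card_gt_0_iff finN)
    have "\<exists>T. legal_seq V E ((S @ [v]) @ T) \<and> DOM ((S @ [v]) @ T) = DOM (S @ [v]) \<union> A' \<and>
             (k - 1) * length T + c \<ge> card A' + (k - 1)"
    proof (rule less.hyps[OF lt])
      show "finite A'" using less.prems(1) by (simp add: A'_def)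
      show "legal_seq V E (S @ [v])" by (rule leg1)
      show "A' \<inter> DOM (S @ [v]) = {}" using DOM1 less.prems(3) by (auto simp: A'_def)
      show "closed W" by (rule less.prems(4))
      show "W \<inter> DOM (S @ [v]) = {}" using DOM1 less.prems(5,6) by auto
      show "A' \<inter> W = {}" using less.prems(6) by (auto simp: A'_def)
      show "DOM (S @ [v]) \<union> A' \<union> W = V" using DOM1 less.prems(7) by (auto simp: A'_def)
      show "A' \<noteq> {}" by (rule False)
      show "\<forall>Z. closed Z \<longrightarrow> Z \<subseteq> A' \<longrightarrow> Z = {}" using less.prems(9) by (auto simp: A'_def)
      show "\<forall>z\<in>A'. card (tw z) \<le> c" using less.prems(10) by (auto simp: A'_def)
    qed
    then obtain T where T: "legal_seq V E ((S @ [v]) @ T)" "DOM ((S @ [v]) @ T) = DOM (S @ [v]) \<union> A'"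
      "(k - 1) * length T + c \<ge> card A' + (k - 1)" by blast
    show ?thesis
    proof (rule exI[of _ "v # T"], intro conjI)
      show "legal_seq V E (S @ v # T)" using T(1) by simp
      show "DOM (S @ v # T) = DOM S \<union> A" using T(2) DOM1 by (auto simp: A'_def)
      show "(k - 1) * length (v # T) + c \<ge> card A + (k - 1)"
        using T(3) cardA fle by simp
    qed
  qed
qed

lemma region:
  assumes H: "\<forall>z\<in>V. \<exists>u\<in>N z. \<exists>u'\<in>N z. N u \<noteq> N u'"
    and leg: "legal_seq V E S" and cR: "closed R" and Rne: "R \<noteq> {}"
    and Rmin: "\<forall>Z. closed Z \<longrightarrow> Z \<subseteq> R \<longrightarrow> Z = {} \<or> Z = R"
    and cW: "closed W" and RW: "R \<inter> W = {}" and RD: "R \<inter> DOM S = {}" and WD: "W \<inter> DOM S = {}"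
    and cov: "DOM S \<union> R \<union> W = V"
  shows "\<exists>T. legal_seq V E (S @ T) \<and> DOM (S @ T) = DOM S \<union> R \<and>
             (k - 1) * length T \<ge> card R + (if 5 \<le> k then 1 else 0)"
proof -
  define b :: nat where "b = (if 5 \<le> k then 1 else 0)"
  have RV: "R \<subseteq> V" using cR by (simp add: closed_def)
  have finR: "finite R" using RV finV finite_subset by blast
  define c where "c = Max (card ` tw ` R)"
  have cmax: "\<forall>z\<in>R. card (tw z) \<le> c" using finR by (simp add: c_def)
  obtain z where z: "z \<in> R" "card (tw z) = c"
    using Max_in[of "card ` tw ` R"] finR Rne unfolding c_def by fastforce
  have zV: "z \<in> V" using z RV by blast
  have Nsub: "\<And>x. N x \<inter> R \<noteq> {} \<Longrightarrow> N x \<subseteq> R" using cR by (auto simp: closed_def)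
  show ?thesis
  proof (cases "c + 2 \<le> k \<and> (5 \<le> k \<longrightarrow> c + 3 \<le> k)")
    case True
    obtain x where x: "x \<in> N z" using N_ne zV by blast
    have xV: "x \<in> V" using x N_sub by blast
    have NxR: "N x \<subseteq> R" using Nsub x z memN_sym by blast
    have leg1: "legal_seq V E (S @ [x])"
      using legal_snoc[OF leg xV] NxR RD N_ne[OF xV] by blast
    have DOM1: "DOM (S @ [x]) = DOM S \<union> N x" by (auto simp: DOM_app DOM_Cons DOM_Nil)
    define A where "A = R - N x"
    have cardNx: "card (N x) = k" using cardN xV by simp
    have cardA: "card A + k = card R"
      using card_Diff_subset[OF finN NxR] card_mono[OF finR NxR] cardNx unfolding A_def by simp
    have Ane: "A \<noteq> {}"
    proof
      assume "A = {}"
      then have RN: "R = N x" using NxR by (auto simp: A_def)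
      have "\<forall>y. N y \<inter> R \<noteq> {} \<longrightarrow> R \<subseteq> N y"
      proof (intro allI impI)
        fix y assume y: "N y \<inter> R \<noteq> {}"
        then have "N y \<subseteq> R" by (rule Nsub)
        moreover have "y \<in> V" using y N_notV by blast
        ultimately show "R \<subseteq> N y" using RN N_eq_of_sub xV by blast
      qed
      then have "R \<subseteq> tw z" using twins_of_cover[OF RV _ z(1)] by blast
      then have "card R \<le> c" using z(2) fin_tw card_mono by metis
      then show False using True cardA by simp
    qed
    have Amin: "\<forall>Z. closed Z \<longrightarrow> Z \<subseteq> A \<longrightarrow> Z = {}"
    proof (intro allI impI)
      fix Z assume "closed Z" "Z \<subseteq> A"
      then have "Z = {} \<or> Z = R" using Rmin A_def by blast
      moreover have "\<not> R \<subseteq> A" using NxR N_ne[OF xV] by (auto simp: A_def)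
      ultimately show "Z = {}" using \<open>Z \<subseteq> A\<close> by blast
    qed
    have "\<exists>T. legal_seq V E ((S @ [x]) @ T) \<and> DOM ((S @ [x]) @ T) = DOM (S @ [x]) \<union> A \<and>
      (k - 1) * length T + c \<ge> card A + (k - 1)"
    proof (rule phase)
      show "finite A" using finR by (simp add: A_def)
      show "legal_seq V E (S @ [x])" by (rule leg1)
      show "A \<inter> DOM (S @ [x]) = {}" using DOM1 RD by (auto simp: A_def)
      show "closed W" by (rule cW)
      show "W \<inter> DOM (S @ [x]) = {}" using DOM1 WD RW NxR by auto
      show "A \<inter> W = {}" using RW by (auto simp: A_def)
      show "DOM (S @ [x]) \<union> A \<union> W = V" using DOM1 cov NxR by (auto simp: A_def)
      show "A \<noteq> {}" by (rule Ane)
      show "\<forall>Z. closed Z \<longrightarrow> Z \<subseteq> A \<longrightarrow> Z = {}" by (rule Amin)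
      show "\<forall>z\<in>A. card (tw z) \<le> c" using cmax by (auto simp: A_def)
    qed
    then obtain T where T: "legal_seq V E ((S @ [x]) @ T)" "DOM ((S @ [x]) @ T) = DOM (S @ [x]) \<union> A"
      "(k - 1) * length T + c \<ge> card A + (k - 1)" by blast
    show ?thesis
    proof (rule exI[of _ "x # T"], intro conjI)
      show "legal_seq V E (S @ x # T)" using T(1) by simp
      show "DOM (S @ x # T) = DOM S \<union> R" using T(2) DOM1 NxR by (auto simp: A_def)
      show "(k - 1) * length (x # T) \<ge> card R + (if 5 \<le> k then 1 else 0)"
        using T(3) cardA True k3 by (auto split: if_splits)
    qed
  next
    case False
    have c2: "c \<ge> 2 + b" using False k3 unfolding b_def by auto
    obtain u u' where u: "u \<in> N z" "u' \<in> N z" "N u \<noteq> N u'" using H zV by blast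
    have uV: "u \<in> V" "u' \<in> V" using u N_sub by blast+
    have NuR: "N u \<subseteq> R" "N u' \<subseteq> R" using Nsub u z memN_sym by blast+
    have twsub: "tw z \<subseteq> N u \<inter> N u'"
      using u memN_sym unfolding tw_def by auto
    have cI: "c \<le> card (N u \<inter> N u')" using z(2) twsub card_mono finN by (metis finite_Int)
    have cU: "card (N u \<union> N u') + c \<le> 2 * k"
      using card_Un_Int[OF finN finN, of u u'] cardN uV cI by simp
    have leg1: "legal_seq V E (S @ [u])"
      using legal_snoc[OF leg uV(1)] NuR RD N_ne[OF uV(1)] by blast
    have DOM1: "DOM (S @ [u]) = DOM S \<union> N u" by (auto simp: DOM_app DOM_Cons DOM_Nil)
    have "\<not> N u' \<subseteq> N u" using N_eq_of_sub uV u(3) by metis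
    then have leg2: "legal_seq V E (S @ [u, u'])"
      using legal_snoc[OF leg1 uV(2)] NuR RD DOM1 by auto
    have DOM2: "DOM (S @ [u, u']) = DOM S \<union> (N u \<union> N u')" by (auto simp: DOM_app DOM_Cons DOM_Nil)
    define A where "A = R - (N u \<union> N u')"
    have NUR: "N u \<union> N u' \<subseteq> R" using NuR by blast
    have cardA: "card A + card (N u \<union> N u') = card R"
      using card_Diff_subset[OF _ NUR] card_mono[OF finR NUR] finN unfolding A_def by simp
    show ?thesis
    proof (cases "A = {}")
      case True
      show ?thesis
        apply (rule exI[of _ "[u, u']"])
        using leg2 DOM2 True NUR cardA cU c2 k3 unfolding A_def b_def
        by (auto split: if_splits)
    next
      case Ane: False
      have Amin: "\<forall>Z. closed Z \<longrightarrow> Z \<subseteq> A \<longrightarrow> Z = {}"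
      proof (intro allI impI)
        fix Z assume "closed Z" "Z \<subseteq> A"
        then have "Z = {} \<or> Z = R" using Rmin A_def by blast
        moreover have "\<not> R \<subseteq> A" using NuR N_ne[OF uV(1)] by (auto simp: A_def)
        ultimately show "Z = {}" using \<open>Z \<subseteq> A\<close> by blast
      qed
      have "\<exists>T. legal_seq V E ((S @ [u, u']) @ T) \<and> DOM ((S @ [u, u']) @ T) = DOM (S @ [u, u']) \<union> A \<and>
        (k - 1) * length T + c \<ge> card A + (k - 1)"
      proof (rule phase)
        show "finite A" using finR by (simp add: A_def)
        show "legal_seq V E (S @ [u, u'])" by (rule leg2)
        show "A \<inter> DOM (S @ [u, u']) = {}" using DOM2 RD by (auto simp: A_def)
        show "closed W" by (rule cW)
        show "W \<inter> DOM (S @ [u, u']) = {}" using DOM2 WD RW NUR by auto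
        show "A \<inter> W = {}" using RW by (auto simp: A_def)
        show "DOM (S @ [u, u']) \<union> A \<union> W = V" using DOM2 cov NUR by (auto simp: A_def)
        show "A \<noteq> {}" by (rule Ane)
        show "\<forall>Z. closed Z \<longrightarrow> Z \<subseteq> A \<longrightarrow> Z = {}" by (rule Amin)
        show "\<forall>z\<in>A. card (tw z) \<le> c" using cmax by (auto simp: A_def)
      qed
      then obtain T where T: "legal_seq V E ((S @ [u, u']) @ T)"
        "DOM ((S @ [u, u']) @ T) = DOM (S @ [u, u']) \<union> A"
        "(k - 1) * length T + c \<ge> card A + (k - 1)" by blast
      show ?thesis
      proof (rule exI[of _ "u # u' # T"], intro conjI)
        show "legal_seq V E (S @ u # u' # T)" using T(1) by simp
        show "DOM (S @ u # u' # T) = DOM S \<union> R" using T(2) DOM2 NUR by (auto simp: A_def)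
        show "(k - 1) * length (u # u' # T) \<ge> card R + (if 5 \<le> k then 1 else 0)"
          using T(3) cardA cU k3 by (auto split: if_splits)
      qed
    qed
  qed
qed

lemma closed_cover:
  assumes conn: "connected_graph V E" and cA: "closed A" and a: "a \<in> A"
  shows "\<forall>v\<in>V. v \<in> A \<or> (\<exists>x\<in>A. E x v)"
proof
  fix v assume v: "v \<in> V"
  have aV: "a \<in> V" using cA a by (auto simp: closed_def)
  have "(a, v) \<in> {(x, y). E x y}\<^sup>*" using conn aV v by (auto simp: connected_graph_def)
  then show "v \<in> A \<or> (\<exists>x\<in>A. E x v)"
  proof (induction rule: rtrancl_induct)
    case base then show ?case using a by blast
  next
    case (step y z)
    then have yz: "E y z" by simp
    from step.IH show ?case
    proof
      assume "y \<in> A" then show ?thesis using yz by blast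
    next
      assume "\<exists>x\<in>A. E x y"
      then obtain x where x: "x \<in> A" "E x y" by blast
      then have "x \<in> N y" using memN sym by blast
      then have "N y \<subseteq> A" using cA x(1) by (auto simp: closed_def)
      then show ?thesis using yz memN by blast
    qed
  qed
qed

lemma three_closed:
  assumes conn: "connected_graph V E" and "closed A" "closed B" "closed C"
    "A \<noteq> {}" "B \<noteq> {}" "C \<noteq> {}" "A \<inter> B = {}" "A \<inter> C = {}" "B \<inter> C = {}"
  shows False
proof -
  obtain a b cc where abc: "a \<in> A" "b \<in> B" "cc \<in> C" using assms by blast
  have cV: "cc \<in> V" using assms(4) abc by (auto simp: closed_def)
  obtain x where x: "x \<in> A" "E x cc" using closed_cover[OF conn assms(2) abc(1)] cV abc assms(9) by blast
  obtain y where y: "y \<in> B" "E y cc" using closed_cover[OF conn assms(3) abc(2)] cV abc assms(10) by blast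
  have "x \<in> N cc" "y \<in> N cc" using x y memN sym by blast+
  then have "N cc \<subseteq> A" "N cc \<subseteq> B" using x(1) y(1) assms(2,3) unfolding closed_def by blast+
  then show False using N_ne[OF cV] assms(8) by blast
qed

lemma twinH:
  assumes conn: "connected_graph V E" and niso: "\<not> graph_iso V E (Kkk_verts k) (Kkk_edge k)"
  shows "\<forall>z\<in>V. \<exists>u\<in>N z. \<exists>u'\<in>N z. N u \<noteq> N u'"
proof (rule ccontr)
  assume "\<not> ?thesis"
  then obtain z where zV: "z \<in> V" and same: "\<forall>u\<in>N z. \<forall>u'\<in>N z. N u = N u'" by blast
  define Q where "Q = N z"
  obtain u0 where u0: "u0 \<in> Q" using N_ne zV Q_def by blast
  define B where "B = N u0"
  have NQ: "\<forall>u\<in>Q. N u = B" using same u0 unfolding Q_def B_def by blast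
  have u0V: "u0 \<in> V" using u0 N_sub Q_def by blast
  have QV: "Q \<subseteq> V" "B \<subseteq> V" using N_sub Q_def B_def by auto
  have NB: "\<forall>b\<in>B. N b = Q"
  proof
    fix b assume b: "b \<in> B"
    have bV: "b \<in> V" using b QV by blast
    have "Q \<subseteq> N b" using NQ b memN_sym by blast
    then show "N b = Q" using N_eq_of_sub[OF zV bV] Q_def by simp
  qed
  have zB: "z \<in> B" using u0 memN_sym Q_def B_def by blast
  have cQ: "card Q = k" using cardN zV Q_def by simp
  have cB: "card B = k" using cardN u0V B_def by simp
  have BQ: "B \<inter> Q = {}"
  proof (rule ccontr)
    assume "B \<inter> Q \<noteq> {}"
    then obtain b where "b \<in> B" "b \<in> Q" by blast
    then have "N b = Q" "N b = B" using NB NQ by auto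
    then have "b \<in> N b" using \<open>b \<in> B\<close> by simp
    then show False using memN irr by blast
  qed
  have Vcov: "V = B \<union> Q"
  proof
    show "B \<union> Q \<subseteq> V" using QV by blast
    show "V \<subseteq> B \<union> Q"
    proof
      fix v assume v: "v \<in> V"
      have "(z, v) \<in> {(x, y). E x y}\<^sup>*" using conn zV v by (auto simp: connected_graph_def)
      then show "v \<in> B \<union> Q"
      proof (induction rule: rtrancl_induct)
        case base then show ?case using zB by blast
      next
        case (step y w)
        then have "w \<in> N y" using memN by simp
        then show ?case using step.IH NB NQ by blast
      qed
    qed
  qed
  have finB: "finite B" "finite Q" using QV finV finite_subset by auto
  obtain g where g: "bij_betw g B {0..<k}" using ex_bij_betw_finite_nat[OF finB(1)] cB by auto
  obtain h where h: "bij_betw h Q {0..<k}" using ex_bij_betw_finite_nat[OF finB(2)] cQ by auto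
  define f where "f x = (if x \<in> B then g x else k + h x)" for x
  have f1: "bij_betw f B {0..<k}" using g by (rule bij_betw_cong[THEN iffD1, rotated]) (simp add: f_def)
  have hk: "bij_betw (\<lambda>x. k + h x) Q {k..<2*k}"
  proof -
    have "bij_betw (\<lambda>n. k + n) {0..<k} {k..<2*k}"
      by (rule bij_betw_byWitness[of _ "\<lambda>n. n - k"]) (auto simp: image_def intro!: exI[of _ "_ - k"])
    from bij_betw_trans[OF h this] show ?thesis by (simp add: comp_def)
  qed
  have fq: "\<And>x. x \<in> Q \<Longrightarrow> f x = k + h x" using BQ by (auto simp: f_def)
  have f2: "bij_betw f Q {k..<2*k}" using hk bij_betw_cong[of Q f "\<lambda>x. k + h x" "{k..<2*k}"] fq by blast
  have fb: "bij_betw f V (Kkk_verts k)"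
    unfolding Vcov Kkk_verts_def
    using bij_betw_combine[OF f1 f2] by (simp add: ivl_disj_un_two(3))
  have fB: "\<forall>x\<in>B. f x < k" using g by (auto simp: f_def bij_betw_def)
  have fQ: "\<forall>x\<in>Q. k \<le> f x \<and> f x < 2 * k" using f2 by (auto simp: bij_betw_def)
  have "\<forall>x\<in>V. \<forall>y\<in>V. E x y \<longleftrightarrow> Kkk_edge k (f x) (f y)"
  proof (intro ballI)
    fix x y assume x: "x \<in> V" and y: "y \<in> V"
    have Exy: "E x y \<longleftrightarrow> y \<in> N x" using memN by simp
    have xx: "x \<in> B \<or> x \<in> Q" "y \<in> B \<or> y \<in> Q" using x y Vcov by auto
    show "E x y \<longleftrightarrow> Kkk_edge k (f x) (f y)"
      unfolding Exy
    proof (cases "x \<in> B")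
      case True
      then have "N x = Q" "f x < k" using NB fB by auto
      moreover have "y \<in> Q \<longleftrightarrow> k \<le> f y" using xx(2) fB fQ BQ by force
      moreover have "f y < 2 * k" using xx(2) fB fQ by force
      ultimately show "y \<in> N x \<longleftrightarrow> Kkk_edge k (f x) (f y)" unfolding Kkk_edge_def by auto
    next
      case False
      then have xQ: "x \<in> Q" using xx by auto
      then have "N x = B" "k \<le> f x" "f x < 2 * k" using NQ fQ by auto
      moreover have "y \<in> B \<longleftrightarrow> f y < k" using xx(2) fB fQ BQ by force
      moreover have "f y < 2 * k" using xx(2) fB fQ by force
      ultimately show "y \<in> N x \<longleftrightarrow> Kkk_edge k (f x) (f y)" unfolding Kkk_edge_def by auto
    qed
  qed
  then have "graph_iso V E (Kkk_verts k) (Kkk_edge k)" using fb by (auto simp: graph_iso_def)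
  then show False using niso by simp
qed

lemma main_seq:
  assumes conn: "connected_graph V E" and niso: "\<not> graph_iso V E (Kkk_verts k) (Kkk_edge k)"
  shows "\<exists>T. legal_seq V E T \<and> DOM T = V \<and> (k - 1) * length T \<ge> card V + (if 5 \<le> k then 1 else 0)"
proof -
  have H: "\<forall>z\<in>V. \<exists>u\<in>N z. \<exists>u'\<in>N z. N u \<noteq> N u'" by (rule twinH[OF conn niso])
  have Vne: "V \<noteq> {}" using conn by (simp add: connected_graph_def)
  show ?thesis
  proof (cases "\<forall>Z. closed Z \<longrightarrow> Z \<subseteq> V \<longrightarrow> Z = {} \<or> Z = V")
    case True
    have "\<exists>T. legal_seq V E ([] @ T) \<and> DOM ([] @ T) = DOM [] \<union> V \<and>
             (k - 1) * length T \<ge> card V + (if 5 \<le> k then 1 else 0)"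
      by (rule region[where W="{}", OF H legal_Nil closed_V Vne True]) (auto simp: closed_def DOM_Nil)
    then show ?thesis by (simp add: DOM_Nil)
  next
    case False
    then obtain Z where Z: "closed Z" "Z \<noteq> {}" "Z \<noteq> V" by blast
    have ZV: "Z \<subseteq> V" using Z by (simp add: closed_def)
    have cZ': "closed (V - Z)" using closed_diff[OF closed_V Z(1)] .
    have Z'ne: "V - Z \<noteq> {}" using Z(3) ZV by blast
    have Zmin: "\<forall>Y. closed Y \<longrightarrow> Y \<subseteq> Z \<longrightarrow> Y = {} \<or> Y = Z"
    proof (intro allI impI)
      fix Y assume Y: "closed Y" "Y \<subseteq> Z"
      show "Y = {} \<or> Y = Z"
      proof (rule ccontr)
        assume "\<not> (Y = {} \<or> Y = Z)"
        then have "Y \<noteq> {}" "Z - Y \<noteq> {}" using Y by auto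
        then show False
          using three_closed[OF conn Y(1) closed_diff[OF Z(1) Y(1)] cZ'] Z'ne Y(2) by blast
      qed
    qed
    have Z'min: "\<forall>Y. closed Y \<longrightarrow> Y \<subseteq> V - Z \<longrightarrow> Y = {} \<or> Y = V - Z"
    proof (intro allI impI)
      fix Y assume Y: "closed Y" "Y \<subseteq> V - Z"
      show "Y = {} \<or> Y = V - Z"
      proof (rule ccontr)
        assume "\<not> (Y = {} \<or> Y = V - Z)"
        then have "Y \<noteq> {}" "(V - Z) - Y \<noteq> {}" using Y by auto
        then show False
          using three_closed[OF conn Y(1) closed_diff[OF cZ' Y(1)] Z(1)] Z(2) Y(2) by blast
      qed
    qed
    have "\<exists>T. legal_seq V E ([] @ T) \<and> DOM ([] @ T) = DOM [] \<union> Z \<and>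
             (k - 1) * length T \<ge> card Z + (if 5 \<le> k then 1 else 0)"
      by (rule region[OF H legal_Nil Z(1) Z(2) Zmin cZ']) (use ZV in \<open>auto simp: DOM_Nil\<close>)
    then obtain T1 where T1: "legal_seq V E T1" "DOM T1 = Z"
      "(k - 1) * length T1 \<ge> card Z + (if 5 \<le> k then 1 else 0)" by (auto simp: DOM_Nil)
    have "\<exists>T. legal_seq V E (T1 @ T) \<and> DOM (T1 @ T) = DOM T1 \<union> (V - Z) \<and>
             (k - 1) * length T \<ge> card (V - Z) + (if 5 \<le> k then 1 else 0)"
      by (rule region[where W="{}", OF H T1(1) cZ' Z'ne Z'min]) (use ZV T1(2) in \<open>auto simp: closed_def\<close>)
    then obtain T2 where T2: "legal_seq V E (T1 @ T2)" "DOM (T1 @ T2) = V"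
      "(k - 1) * length T2 \<ge> card (V - Z) + (if 5 \<le> k then 1 else 0)" using T1(2) ZV by auto
    have "card V = card Z + card (V - Z)" using card_Diff_subset[of Z V] card_mono[of V Z] ZV finV
      by (metis finite_subset le_add_diff_inverse)
    then have "(k - 1) * length (T1 @ T2) \<ge> card V + (if 5 \<le> k then 1 else 0)"
      using T1(3) T2(3) by (simp add: distrib_left split: if_splits)
    then show ?thesis using T2 by blast
  qed
qed

end


theorem mainTheorem14:
  fixes V :: "'a set" and E :: "'a \<Rightarrow> 'a \<Rightarrow> bool" and k :: nat
  assumes "simple_graph V E"
    and "k \<ge> 3"
    and "regular V E k"
    and "connected_graph V E"
    and "\<not> graph_iso V E (Kkk_verts k) (Kkk_edge k)"
  shows "real (gamma_gr_t V E) \<ge> real (card V) / (real k - 1) \<and>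
         (k \<ge> 5 \<longrightarrow> real (gamma_gr_t V E) > real (card V) / (real k - 1))"
proof -
  interpret kreg V E k using assms(1,3,2) by unfold_locales
  obtain T where T: "legal_seq V E T" "DOM T = V"
    "(k - 1) * length T \<ge> card V + (if 5 \<le> k then 1 else 0)"
    using main_seq[OF assms(4,5)] by blast
  have tds: "total_dominating_seq V E T"
    unfolding total_dominating_seq_def total_dominating_set_def
  proof (intro conjI ballI)
    show "legal_seq V E T" by (rule T(1))
    show "set T \<subseteq> V" using T(1) by (simp add: legal_seq_def)
    fix v assume "v \<in> V"
    then obtain u where "u \<in> set T" "v \<in> N u" using T(2) by (auto simp: DOM_def)
    then show "\<exists>u\<in>set T. E v u" using memN sym by blast
  qed
  have fin: "finite {length S | S. total_dominating_seq V E S}"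
  proof (rule finite_subset[of _ "{..card V}"])
    show "{length S | S. total_dominating_seq V E S} \<subseteq> {..card V}"
    proof
      fix x assume "x \<in> {length S | S. total_dominating_seq V E S}"
      then obtain S where S: "x = length S" "total_dominating_seq V E S" by blast
      then have "distinct S" "set S \<subseteq> V" by (auto simp: total_dominating_seq_def legal_seq_def)
      then have "length S \<le> card V" using card_mono[OF finV] distinct_card by metis
      then show "x \<in> {..card V}" using S by simp
    qed
  qed simp
  have g: "length T \<le> gamma_gr_t V E"
    unfolding gamma_gr_t_def using fin tds by (auto intro!: Max_ge)
  have kpos: "real k - 1 > 0" using assms(2) by simp
  have rk: "real (k - 1) = real k - 1" using assms(2) by simp
  have main: "real (card V) + (if 5 \<le> k then 1 else 0) \<le> real (gamma_gr_t V E) * (real k - 1)"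
  proof -
    have "real (card V + (if 5 \<le> k then 1 else 0)) \<le> real ((k - 1) * length T)"
      using T(3) by linarith
    also have "\<dots> \<le> real ((k - 1) * gamma_gr_t V E)" using g by (simp only: of_nat_le_iff) (rule mult_le_mono2)
    finally show ?thesis using rk by (simp add: mult.commute split: if_splits)
  qed
  show ?thesis
  proof
    show "real (card V) / (real k - 1) \<le> real (gamma_gr_t V E)"
      using main kpos by (simp add: divide_le_eq split: if_splits)
    show "5 \<le> k \<longrightarrow> real (card V) / (real k - 1) < real (gamma_gr_t V E)"
      using main kpos by (simp add: divide_less_eq split: if_splits)
  qed
qed

end
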